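(* Let $n$ and $N$ be non-negative integers with $N\le 2n-3$. Suppose $f_0,f_1,\dots,f_N$ is a sequence of positive integers such that (1) $f_0=2$, (2) $f_i=f_{i-1}\pm1$ for $1\le i\le N$, and (3) $f_i\le 2n-i-2$ for $0\le i\le N$. Then there exists a fully heterochronous ranked tree shape with $n$ leaves whose $\mathbf{F}$-matrix $F$ satisfies $F_{i,i}=f_i$ for all $0\le i\le N$.
   Context: A fully heterochronous ranked tree shape with $n$ leaves is a rooted full binary tree (every node has out-degree $0$ or $2$), without leaf labels, with $n$ leaves, together with a total ordering of all $2n-1$ nodes (leaves included) such that nodes appear in increasing order along every path from the root to a leaf; the position of a node in this order, numbered $0,1,\dots,2n-2$, is its rank (the root has rank $0$). Its $\mathbf{F}$-matrix is the $(2n-2)\times(2n-2)$ lower triangular matrix $F$, with indices running from $0$ to $2n-3$, where for $0\le j\le i$ the entry $F_{i,j}$ is the number of edges from a parent node $v$ to a child node $w$ such that the rank of $v$ is at most $j$ and the rank of $w$ is larger than $i$. *)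

theory Defs
  imports Main
begin

text \<open>A fully heterochronous ranked tree shape with n leaves is represented by
  identifying each of its 2n-1 nodes with its rank in {0..2n-2} (the root has
  rank 0) and recording, for every non-root node w (rank 1..2n-2), the rank
  par w of its parent.  Since leaves are unlabelled and the children of a node
  are unordered, such a tree shape up to isomorphism corresponds exactly to
  such a parent function.  The ranks increase along root-to-leaf paths iff
  par w < w.\<close>

definition children :: "nat \<Rightarrow> (nat \<Rightarrow> nat) \<Rightarrow> nat \<Rightarrow> nat set" where
  "children n par v = {w \<in> {1..2*n-2}. par w = v}"

definition fhrts :: "nat \<Rightarrow> (nat \<Rightarrow> nat) \<Rightarrow> bool" where
  "fhrts n par \<longleftrightarrow>
     n \<ge> 1 \<and>
     (\<forall>w \<in> {1..2*n-2}. par w < w) \<and>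
     (\<forall>v \<in> {0..2*n-2}. card (children n par v) = 0 \<or> card (children n par v) = 2) \<and>
     card {v \<in> {0..2*n-2}. children n par v = {}} = n"

definition Fmat :: "nat \<Rightarrow> (nat \<Rightarrow> nat) \<Rightarrow> nat \<Rightarrow> nat \<Rightarrow> nat" where
  "Fmat n par i j = card {w \<in> {1..2*n-2}. par w \<le> j \<and> i < w}"

end

theory Submission
  imports Defs
begin

lemma count_lemma:
  fixes c :: "nat \<Rightarrow> nat"
  assumes step: "\<forall>k. c (Suc k) = c k \<or> c (Suc k) = Suc (c k)"
  shows "card {v \<in> {1..m}. c v = c (v-1)} + c m = m + c 0"
proof (induction m)
  case 0
  then show ?case by simp
next
  case (Suc m)
  have eq: "{v \<in> {1..Suc m}. c v = c (v-1)} = {v \<in> {1..m}. c v = c (v-1)} \<union>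
     (if c (Suc m) = c m then {Suc m} else {})"
    by (auto simp: le_Suc_eq)
  show ?case
  proof (cases "c (Suc m) = c m")
    case True
    then have "card {v \<in> {1..Suc m}. c v = c (v-1)} = Suc (card {v \<in> {1..m}. c v = c (v-1)})"
      unfolding eq by (simp add: card_insert_if)
    then show ?thesis using Suc True by simp
  next
    case False
    then have "c (Suc m) = Suc (c m)" using step by metis
    moreover have "card {v \<in> {1..Suc m}. c v = c (v-1)} = card {v \<in> {1..m}. c v = c (v-1)}"
      unfolding eq using False by simp
    ultimately show ?thesis using Suc by simp
  qed
qed

lemma tree_from_c:
  fixes n :: nat and c :: "nat \<Rightarrow> nat"
  assumes n2: "n \<ge> 2" and c0: "c 0 = 1"
    and step: "\<forall>k. c (Suc k) = c k \<or> c (Suc k) = Suc (c k)"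
    and pos: "\<forall>k < 2*n-2. k < 2 * c k" and fin: "c (2*n-2) = n-1"
  shows "fhrts n (\<lambda>w. LEAST v. w \<le> 2 * c v) \<and>
    (\<forall>i \<le> 2*n-2. Fmat n (\<lambda>w. LEAST v. w \<le> 2 * c v) i i = 2 * c i - i)"
proof -
  define par where "par = (\<lambda>w. LEAST v. w \<le> 2 * c v)"
  have mono: "c a \<le> c b" if "a \<le> b" for a b
    using that
  proof (induction b)
    case 0 then show ?case by simp
  next
    case (Suc b)
    then show ?case using step[rule_format, of b] by (auto simp: le_Suc_eq)
  qed
  have cle: "c k \<le> n - 1" if "k \<le> 2*n-2" for k
    using mono[OF that] fin by simp
  have key: "par w \<le> v \<longleftrightarrow> w \<le> 2 * c v" if "w \<le> 2*n-2" for w v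
  proof
    have ex: "w \<le> 2 * c (2*n-2)" using fin that n2 by simp
    assume "par w \<le> v"
    moreover have "w \<le> 2 * c (par w)" unfolding par_def by (rule LeastI[of _ "2*n-2"], fact ex)
    ultimately show "w \<le> 2 * c v" using mono[of "par w" v] by simp
  next
    assume "w \<le> 2 * c v"
    then show "par w \<le> v" unfolding par_def by (rule Least_le)
  qed
  have parlt: "\<forall>w \<in> {1..2*n-2}. par w < w"
  proof
    fix w assume w: "w \<in> {1..2*n-2}"
    then have "w - 1 < 2 * c (w - 1)" using pos by auto
    then have "w \<le> 2 * c (w - 1)" by simp
    then have "par w \<le> w - 1" using key w by auto
    moreover have "1 \<le> w" using w by simp
    ultimately show "par w < w" by linarith
  qed
  define lo where "lo v = (if v = 0 then 0 else 2 * c (v - 1))" for v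
  have ch: "children n par v = {Suc (lo v) .. 2 * c v}" if v: "v \<le> 2*n-2" for v
  proof (cases "v = 0")
    case True
    have "children n par v = {w \<in> {1..2*n-2}. w \<le> 2 * c 0}"
      unfolding children_def using True key by (auto simp del: c0)
    also have "\<dots> = {Suc (lo v) .. 2 * c v}" using True c0 n2 lo_def by auto
    finally show ?thesis .
  next
    case False
    have "par w = v \<longleftrightarrow> par w \<le> v \<and> \<not> par w \<le> v - 1" for w using False by auto
    then have "children n par v = {w \<in> {1..2*n-2}. w \<le> 2 * c v \<and> \<not> w \<le> 2 * c (v-1)}"
      unfolding children_def using key by auto
    also have "\<dots> = {Suc (lo v) .. 2 * c v}" using False lo_def cle[OF v] n2 by auto
    finally show ?thesis .
  qed
  have cardch: "card (children n par v) = 0 \<or> card (children n par v) = 2" if "v \<in> {0..2*n-2}" for v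
  proof (cases "v = 0")
    case True
    then show ?thesis using ch[of v] that c0 lo_def by simp
  next
    case False
    then obtain u where u: "v = Suc u" by (cases v) auto
    then show ?thesis using ch[of v] that lo_def step[rule_format, of u] by auto
  qed
  have lv: "{v \<in> {0..2*n-2}. children n par v = {}} = {v \<in> {1..2*n-2}. c v = c (v-1)}"
  proof -
    have "children n par v = {} \<longleftrightarrow> v \<noteq> 0 \<and> c v = c (v-1)" if "v \<le> 2*n-2" for v
    proof (cases "v = 0")
      case True
      then show ?thesis using ch[OF that] c0 lo_def by simp
    next
      case False
      then obtain u where u: "v = Suc u" by (cases v) auto
      then show ?thesis using ch[OF that] lo_def step[rule_format, of u] by auto
    qed
    then show ?thesis by (intro Collect_cong) fastforce
  qed
  have "card {v \<in> {0..2*n-2}. children n par v = {}} = n"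
    unfolding lv using count_lemma[OF step, of "2*n-2"] fin c0 n2 by simp
  then have F: "fhrts n par" unfolding fhrts_def using n2 parlt cardch by auto
  have Fm: "Fmat n par i i = 2 * c i - i" if i: "i \<le> 2*n-2" for i
  proof -
    have "{w \<in> {1..2*n-2}. par w \<le> i \<and> i < w} = {Suc i .. 2 * c i}"
      using key cle[OF i] by auto
    then show ?thesis unfolding Fmat_def by simp
  qed
  show ?thesis using F Fm unfolding par_def by blast
qed

theorem corollary1:
  fixes n N :: nat and f :: "nat \<Rightarrow> int"
  assumes "int N \<le> 2 * int n - 3"
    and "\<forall>i \<le> N. f i > 0"
    and "f 0 = 2"
    and "\<forall>i \<in> {1..N}. f i = f (i - 1) + 1 \<or> f i = f (i - 1) - 1"
    and "\<forall>i \<le> N. f i \<le> 2 * int n - int i - 2"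
  shows "\<exists>par. fhrts n par \<and> (\<forall>i \<le> N. int (Fmat n par i i) = f i)"
proof -
  note a1 = assms(1) and a2 = assms(2) and a3 = assms(3) and a4 = assms(4) and a5 = assms(5)
  have n2: "n \<ge> 2" using a1 by linarith
  have ev: "even (f i + int i)" if "i \<le> N" for i
    using that
  proof (induction i)
    case 0 then show ?case using a3 by simp
  next
    case (Suc i)
    have "Suc i \<in> {1..N}" using Suc.prems by simp
    then have "f (Suc i) = f i + 1 \<or> f (Suc i) = f i - 1" using a4 by fastforce
    then show ?case using Suc by auto
  qed
  define d where "d i = nat ((f i + int i) div 2)" for i
  have dk: "2 * int (d i) = f i + int i" if "i \<le> N" for i
    using ev[OF that] a2 that unfolding d_def by auto
  have dN: "d N \<le> n - 1" using dk[of N] a5 n2 by auto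
  define c where "c k = (if k \<le> N then d k else min (d N + (k - N)) (n-1))" for k
  have c0: "c 0 = 1" using dk[of 0] a3 unfolding c_def by simp
  have step: "\<forall>k. c (Suc k) = c k \<or> c (Suc k) = Suc (c k)"
  proof
    fix k
    show "c (Suc k) = c k \<or> c (Suc k) = Suc (c k)"
    proof (cases "Suc k \<le> N")
      case True
      then have "Suc k \<in> {1..N}" by simp
      then have "f (Suc k) = f k + 1 \<or> f (Suc k) = f k - 1" using a4 by fastforce
      then have "2 * int (d (Suc k)) = 2 * int (d k) + 2 \<or> 2 * int (d (Suc k)) = 2 * int (d k)"
        using dk[OF True] dk[of k] True by auto
      then show ?thesis using True unfolding c_def by auto
    next
      case False
      then have "k = N \<or> N < k" by auto
      then show ?thesis using dN unfolding c_def by auto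
    qed
  qed
  have pos: "\<forall>k < 2*n-2. k < 2 * c k"
  proof (intro allI impI)
    fix k assume k: "k < 2*n-2"
    show "k < 2 * c k"
    proof (cases "k \<le> N")
      case True
      then show ?thesis using dk[OF True] a2 unfolding c_def by auto
    next
      case False
      then show ?thesis using dk[of N] a2 k unfolding c_def by auto
    qed
  qed
  have fin: "c (2*n-2) = n-1"
    using a1 dk[of N] a2 unfolding c_def by auto
  from tree_from_c[OF n2 c0 step pos fin] obtain par where
    P: "fhrts n par" "\<forall>i \<le> 2*n-2. Fmat n par i i = 2 * c i - i" by blast
  have "\<forall>i \<le> N. int (Fmat n par i i) = f i"
  proof (intro allI impI)
    fix i assume i: "i \<le> N"
    have "i \<le> 2*n-2" using i a1 by linarith
    then have "Fmat n par i i = 2 * c i - i" using P by blast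
    moreover have "2 * int (c i) = f i + int i" using dk[OF i] i unfolding c_def by simp
    ultimately show "int (Fmat n par i i) = f i" using a2 i by auto
  qed
  then show ?thesis using P by blast
qed

end
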